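(* Let $G$ and $H$ be Left dead-ends with $G\neq 0$ and $H\neq 0$. Then no Left dead-end $K$ with $K=G+H$ has $0$ as a Right option.
   Context: Games are finite partizan games; $o(G)$ is the misère outcome class (ordered $\mathscr{L}>\mathscr{N}>\mathscr{R}$, $\mathscr{L}>\mathscr{P}>\mathscr{R}$). A universe is a set of games closed under options, disjunctive sums, conjugates, and forming $\{\mathscr{G}^L\mid\mathscr{G}^R\}$ from nonempty finite subsets of it; $G\geq_\mathcal{U}H$ means $o(G+X)\geq o(H+X)$ for all $X\in\mathcal{U}$. A Left dead-end is a game all of whose subpositions have no Left option. For Left dead-ends, $G\geq H$ means $G\geq_\mathcal{U}H$ for every universe $\mathcal{U}$, and $G=H$ means $G\geq H$ and $H\geq G$. *)

theory Defs
  imports Main "HOL-Library.FSet"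
begin

datatype game = Game (lopts: "game fset") (ropts: "game fset")

definition zero_game :: game where
  "zero_game = Game {||} {||}"

lemma size_lopt[termination_simp]: "x |\<in>| L \<Longrightarrow> size x < size (Game L R)"
  by (induct L) (auto simp: size_fset_overloaded_simps)

lemma size_ropt[termination_simp]: "x |\<in>| R \<Longrightarrow> size x < size (Game L R)"
  by (induct R) (auto simp: size_fset_overloaded_simps)

lemma size_lopt': "(x::game) |\<in>| L \<Longrightarrow> size x < Suc ((\<Sum>y\<in>fset L. Suc (size (y::game))) + (\<Sum>y\<in>fset R. Suc (size (y::game))))"
  using size_lopt[of x L R] by simp

lemma size_ropt': "(x::game) |\<in>| R \<Longrightarrow> size x < Suc ((\<Sum>y\<in>fset L. Suc (size (y::game))) + (\<Sum>y\<in>fset R. Suc (size (y::game))))"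
  using size_ropt[of x R L] by simp

function gsum :: "game \<Rightarrow> game \<Rightarrow> game" where
  "gsum (Game GL GR) (Game HL HR) =
     Game ((\<lambda>x. gsum x (Game HL HR)) |`| GL |\<union>| (\<lambda>y. gsum (Game GL GR) y) |`| HL)
          ((\<lambda>x. gsum x (Game HL HR)) |`| GR |\<union>| (\<lambda>y. gsum (Game GL GR) y) |`| HR)"
  by pat_completeness auto
termination
  by (relation "measure (\<lambda>(G,H). size G + size H)") (auto dest: size_lopt size_ropt)

primrec conj_game :: "game \<Rightarrow> game" where
  "conj_game (Game L R) = Game (conj_game |`| R) (conj_game |`| L)"

text \<open>lwins G: Left, moving first in G, wins under misere play;
  rwins G: Right, moving first in G, wins. A player with no move wins.\<close>
function lwins :: "game \<Rightarrow> bool" and rwins :: "game \<Rightarrow> bool" where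
  "lwins (Game L R) = (L = {||} \<or> (\<exists>x\<in>fset L. \<not> rwins x))"
| "rwins (Game L R) = (R = {||} \<or> (\<exists>x\<in>fset R. \<not> lwins x))"
  by pat_completeness auto
termination
  by (relation "measure (\<lambda>x. case x of Inl G \<Rightarrow> size G | Inr G \<Rightarrow> size G)")
     (simp_all add: size_lopt' size_ropt')

datatype outcome = OutL | OutN | OutP | OutR

definition outcome :: "game \<Rightarrow> outcome" where
  "outcome G = (if lwins G then (if rwins G then OutN else OutL)
                else (if rwins G then OutR else OutP))"

definition outcome_ge :: "outcome \<Rightarrow> outcome \<Rightarrow> bool" where
  "outcome_ge a b = (a = b \<or> a = OutL \<or> b = OutR)"

definition universe :: "game set \<Rightarrow> bool" where
  "universe U \<longleftrightarrow>
     (\<forall>G\<in>U. \<forall>x. (x |\<in>| lopts G \<or> x |\<in>| ropts G) \<longrightarrow> x \<in> U) \<and>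
     (\<forall>G\<in>U. \<forall>H\<in>U. gsum G H \<in> U) \<and>
     (\<forall>G\<in>U. conj_game G \<in> U) \<and>
     (\<forall>A B. A \<noteq> {||} \<and> B \<noteq> {||} \<and> fset A \<subseteq> U \<and> fset B \<subseteq> U \<longrightarrow> Game A B \<in> U)"

definition game_ge_in :: "game set \<Rightarrow> game \<Rightarrow> game \<Rightarrow> bool" where
  "game_ge_in U G H \<longleftrightarrow> (\<forall>X\<in>U. outcome_ge (outcome (gsum G X)) (outcome (gsum H X)))"

inductive subposition :: "game \<Rightarrow> game \<Rightarrow> bool" where
  refl: "subposition G G"
| left: "x |\<in>| lopts G \<Longrightarrow> subposition x G"
| right: "x |\<in>| ropts G \<Longrightarrow> subposition x G"
| trans: "subposition x y \<Longrightarrow> subposition y G \<Longrightarrow> subposition x G"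

definition left_dead_end :: "game \<Rightarrow> bool" where
  "left_dead_end G \<longleftrightarrow> (\<forall>x. subposition x G \<longrightarrow> lopts x = {||})"

definition de_ge :: "game \<Rightarrow> game \<Rightarrow> bool" where
  "de_ge G H \<longleftrightarrow> (\<forall>U. universe U \<longrightarrow> game_ge_in U G H)"

definition de_eq :: "game \<Rightarrow> game \<Rightarrow> bool" where
  "de_eq G H \<longleftrightarrow> de_ge G H \<and> de_ge H G"

end

theory Submission
  imports Defs
begin

function noL :: "game \<Rightarrow> bool" where
  "noL (Game L R) = (L = {||} \<and> (\<forall>x\<in>fset R. noL x))"
  by pat_completeness auto
termination
  by (relation "measure size") (simp_all add: size_ropt')

lemma ld_noL: "left_dead_end G \<Longrightarrow> noL G"
proof (induction G rule: noL.induct)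
  case (1 L R)
  have "lopts (Game L R) = {||}" using 1(2) subposition.refl unfolding left_dead_end_def by blast
  moreover have "left_dead_end x" if "x \<in> fset R" for x
    using 1(2) that unfolding left_dead_end_def
    by (metis game.sel(2) subposition.right subposition.trans)
  ultimately show ?case using 1 by auto
qed

lemma noL_gsum: "noL A \<Longrightarrow> noL B \<Longrightarrow> noL (gsum A B)"
proof (induction A B rule: gsum.induct)
  case (1 GL GR HL HR)
  then show ?case by auto
qed

lemma noL_lwins: "noL D \<Longrightarrow> lwins D"
  by (cases D) auto

lemma noL_rwins: "noL D \<Longrightarrow> ropts D \<noteq> {||} \<Longrightarrow> \<not> rwins D"
  by (cases D) (auto simp: noL_lwins)

lemma ropts_gsum: "ropts (gsum A B) = {||} \<longleftrightarrow> ropts A = {||} \<and> ropts B = {||}"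
  by (cases A; cases B) auto

lemma de_eq_refl: "de_eq G G"
  by (simp add: de_eq_def de_ge_def game_ge_in_def outcome_ge_def)

lemma univ: "universe UNIV"
  by (simp add: universe_def)

lemma ropts_ne: "left_dead_end G \<Longrightarrow> \<not> de_eq G zero_game \<Longrightarrow> ropts G \<noteq> {||}"
  using ld_noL[of G] de_eq_refl
  by (cases G) (auto simp: zero_game_def)

theorem mainTheorem14:
  assumes "left_dead_end G" and "left_dead_end H"
    and "\<not> de_eq G zero_game" and "\<not> de_eq H zero_game"
  shows "\<not> (\<exists>K. left_dead_end K \<and> de_eq K (gsum G H) \<and> zero_game |\<in>| ropts K)"
proof
  assume "\<exists>K. left_dead_end K \<and> de_eq K (gsum G H) \<and> zero_game |\<in>| ropts K"
  then obtain K where K: "left_dead_end K" "de_eq K (gsum G H)" "zero_game |\<in>| ropts K" by blast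
  define Z where "Z = zero_game"
  define X where "X = Game {|Z|} {||}"
  have nG: "noL G" and nH: "noL H" and nK: "noL K" using assms K ld_noL by auto
  have rG: "ropts G \<noteq> {||}" and rH: "ropts H \<noteq> {||}" using assms ropts_ne by auto
  have nZ: "noL Z" by (simp add: Z_def zero_game_def)
  obtain KL KR where Kd: "K = Game KL KR" by (cases K)
  have KL: "KL = {||}" using nK Kd by simp
  have Z0: "zero_game |\<in>| KR" using K(3) Kd by simp
  \<comment> \<open>outcome of K + X is N\<close>
  have gKX: "gsum K X = Game {|gsum K Z|} ((\<lambda>x. gsum x X) |`| KR)"
    using Kd KL by (simp add: X_def Z_def zero_game_def)
  have "\<not> lwins (gsum zero_game X)"
    by (simp add: X_def Z_def zero_game_def)
  hence rKX: "rwins (gsum K X)" using gKX Z0 by auto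
  have "\<not> rwins (gsum K Z)"
    using noL_rwins[OF noL_gsum[OF nK nZ]] ropts_gsum Z0 Kd by fastforce
  hence lKX: "lwins (gsum K X)" using gKX by simp
  \<comment> \<open>outcome of G + H + X is L\<close>
  define S where "S = gsum G H"
  have nS: "noL S" using noL_gsum[OF nG nH] S_def by simp
  obtain SL SR where Sd: "S = Game SL SR" by (cases S)
  have SL: "SL = {||}" using nS Sd by simp
  have gSX: "gsum S X = Game {|gsum S Z|} ((\<lambda>x. gsum x X) |`| SR)"
    using Sd SL by (simp add: X_def Z_def zero_game_def)
  have rS: "ropts S \<noteq> {||}" using ropts_gsum rH S_def by simp
  have lSX: "lwins (gsum S X)"
    using gSX noL_rwins[OF noL_gsum[OF nS nZ]] ropts_gsum rS by simp
  have "lwins (gsum x X)" if "x |\<in>| SR" for x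
  proof -
    have xR: "x |\<in>| ropts (gsum G H)" using that Sd S_def by simp
    obtain GL GR HL HR where Gd: "G = Game GL GR" and Hd: "H = Game HL HR"
      by (cases G; cases H)
    have "ropts x \<noteq> {||}"
      using xR rG rH unfolding Gd Hd by (auto simp: ropts_gsum)
    have nx: "noL x" using nS Sd that by simp
    obtain xL xR' where xd: "x = Game xL xR'" by (cases x)
    have "xL = {||}" using nx xd by simp
    hence "gsum x X = Game {|gsum x Z|} ((\<lambda>y. gsum y X) |`| xR')"
      using xd by (simp add: X_def Z_def zero_game_def)
    moreover have "\<not> rwins (gsum x Z)"
      using noL_rwins[OF noL_gsum[OF nx nZ]] ropts_gsum \<open>ropts x \<noteq> {||}\<close> by simp
    ultimately show ?thesis by simp
  qed
  moreover have "SR \<noteq> {||}" using rS Sd by simp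
  ultimately have "\<not> rwins (gsum S X)" using gSX by auto
  have "game_ge_in UNIV K (gsum G H)" using K(2) univ by (simp add: de_eq_def de_ge_def)
  hence "outcome_ge (outcome (gsum K X)) (outcome (gsum S X))"
    unfolding game_ge_in_def S_def by blast
  thus False using rKX lKX lSX \<open>\<not> rwins (gsum S X)\<close>
    by (simp add: outcome_def outcome_ge_def)
qed

end
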